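(* Let $s>0$, $Y>0$, $\tau\geq0$, and assume both components of $E_+=(x_+(\tau),y_+(\tau))=\left(\frac sYe^{s\tau},1-\frac sYe^{s\tau}\right)$ are positive. Let $p(\tau)=s\left(1+\frac{e^{s\tau}}{Y}\right)$, $q=-s$, $c(\tau)=s\left(1-\frac{2se^{s\tau}}{Y}\right)$, $\alpha(\tau)=\frac{s^2e^{s\tau}}{Y}$, and consider the characteristic equation \[ \lambda^2+p(\tau)\lambda+(q\lambda+c(\tau))e^{-\lambda\tau}+\alpha(\tau)=0 \tag{C} \] and the equation in $\omega$ \[ \omega^4+(p(\tau)^2-q^2-2\alpha(\tau))\omega^2+\alpha(\tau)^2-c(\tau)^2=0. \tag{Q} \] Let $\tau^*=\frac1s\ln\left(\frac{Y}{3s}\right)$ and \[ \omega_+(\tau)=\sqrt{\tfrac12\left(-x_+(\tau)^2+\sqrt{x_+(\tau)^4+s^2\left(12x_+(\tau)^2-16x_+(\tau)+4\right)}\right)}. \] \begin{enumerate} \item $\omega_+(\tau^* )=0$. If $\tau\geq\tau^*$, then (Q) has no positive real root, and therefore (C) has no purely imaginary roots. In particular, if $\frac sY\geq\frac13$, then $\tau^*\leq0$ and there can be no Hopf bifurcation of $E_+$ for any $\tau\geq0$. \item Assume $\frac sY<\frac13$, so $\tau^*>0$. If $\tau\in[0,\tau^* )$, then $x_+(\tau)\in[\frac sY,\frac13)$ and (Q) has exactly one positive real root, namely $\omega_+(\tau)$. If (C) has purely imaginary roots at $\tau$ (so $\tau$ is a candidate for a Hopf bifurcation of $E_+$), then $\tau\in(0,\tau^*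 )$ and these roots are $\pm i\omega_+(\tau)$ with $\omega_+(\tau)$ given by the formula above. \end{enumerate}
   Context: (C) is the characteristic equation of the linearization at $E_+$ of the delay system $\dot x=x(1-x)-yx$, $\dot y=-sy+Ye^{-s\tau}y(t-\tau)x(t-\tau)$; (Q) is obtained from substituting $\lambda=i\omega$, $\omega>0$, into (C) and eliminating $\tau\omega$. *)

theory Defs
  imports Complex_Main
begin

definition xp :: "real \<Rightarrow> real \<Rightarrow> real \<Rightarrow> real" where
  "xp s Y \<tau> = s / Y * exp (s * \<tau>)"

definition yp :: "real \<Rightarrow> real \<Rightarrow> real \<Rightarrow> real" where
  "yp s Y \<tau> = 1 - s / Y * exp (s * \<tau>)"

definition pp :: "real \<Rightarrow> real \<Rightarrow> real \<Rightarrow> real" where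
  "pp s Y \<tau> = s * (1 + exp (s * \<tau>) / Y)"

definition qq :: "real \<Rightarrow> real" where
  "qq s = - s"

definition cc :: "real \<Rightarrow> real \<Rightarrow> real \<Rightarrow> real" where
  "cc s Y \<tau> = s * (1 - 2 * s * exp (s * \<tau>) / Y)"

definition alpha :: "real \<Rightarrow> real \<Rightarrow> real \<Rightarrow> real" where
  "alpha s Y \<tau> = s\<^sup>2 * exp (s * \<tau>) / Y"

definition charC :: "real \<Rightarrow> real \<Rightarrow> real \<Rightarrow> complex \<Rightarrow> complex" where
  "charC s Y \<tau> z = z\<^sup>2 + of_real (pp s Y \<tau>) * z
      + (of_real (qq s) * z + of_real (cc s Y \<tau>)) * exp (- z * of_real \<tau>)
      + of_real (alpha s Y \<tau>)"

definition eqQ :: "real \<Rightarrow> real \<Rightarrow> real \<Rightarrow> real \<Rightarrow> real" where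
  "eqQ s Y \<tau> \<omega> = \<omega> ^ 4 + ((pp s Y \<tau>)\<^sup>2 - (qq s)\<^sup>2 - 2 * alpha s Y \<tau>) * \<omega>\<^sup>2
      + (alpha s Y \<tau>)\<^sup>2 - (cc s Y \<tau>)\<^sup>2"

definition tau_star :: "real \<Rightarrow> real \<Rightarrow> real" where
  "tau_star s Y = ln (Y / (3 * s)) / s"

definition omega_plus :: "real \<Rightarrow> real \<Rightarrow> real \<Rightarrow> real" where
  "omega_plus s Y \<tau> = sqrt (1/2 * (- (xp s Y \<tau>)\<^sup>2
      + sqrt ((xp s Y \<tau>) ^ 4 + s\<^sup>2 * (12 * (xp s Y \<tau>)\<^sup>2 - 16 * xp s Y \<tau> + 4))))"

end

theory Submission
  imports Defs "HOL-Analysis.Analysis"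
begin

lemma coef_rw:
  assumes "s > 0" "Y > 0"
  shows "pp s Y t = s + xp s Y t" "cc s Y t = s * (1 - 2 * xp s Y t)"
        "alpha s Y t = s * xp s Y t" "qq s = - s"
  using assms by (auto simp: pp_def cc_def alpha_def qq_def xp_def field_simps power2_eq_square)

lemma eqQ_rw:
  assumes "s > 0" "Y > 0"
  shows "eqQ s Y t w = w^4 + (xp s Y t)^2 * w^2 + s^2 * (3 * xp s Y t - 1) * (1 - xp s Y t)"
  unfolding eqQ_def coef_rw[OF assms] by (simp add: algebra_simps power2_eq_square)

lemma charC_cnj: "charC s Y t (cnj z) = cnj (charC s Y t z)"
  unfolding charC_def by (simp add: exp_cnj)

lemma charC_imp_eqQ:
  assumes "charC s Y t (\<i> * of_real w) = 0"
  shows "eqQ s Y t w = 0"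
proof -
  define A where "A = Complex (alpha s Y t - w^2) (pp s Y t * w)"
  define B where "B = Complex (cc s Y t) (qq s * w)"
  define W where "W = exp (- (\<i> * of_real w) * of_real t)"
  have "charC s Y t (\<i> * of_real w) = A + B * W"
    unfolding charC_def A_def B_def W_def
    by (simp add: complex_eq_iff power2_eq_square algebra_simps)
  then have "A = - B * W" using assms by (simp add: eq_neg_iff_add_eq_0)
  then have "cmod A = cmod B * cmod W" by (simp add: norm_mult)
  moreover have "cmod W = 1" unfolding W_def by simp
  ultimately have "(cmod A)^2 = (cmod B)^2" by simp
  then have "(alpha s Y t - w^2)^2 + (pp s Y t * w)^2 = (cc s Y t)^2 + (qq s * w)^2"
    unfolding cmod_power2 A_def B_def by simp
  then show ?thesis unfolding eqQ_def by (simp add: algebra_simps power2_eq_square power4_eq_xxxx)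
qed

lemma quartic_pos:
  fixes x s w :: real
  assumes "s > 0" "x \<ge> 1/3" "x < 1" "w > 0"
  shows "w^4 + x^2 * w^2 + s^2 * (3 * x - 1) * (1 - x) \<noteq> 0"
proof -
  have "s^2 * (3 * x - 1) * (1 - x) \<ge> 0" using assms by simp
  moreover have "w^4 > 0" using assms by simp
  moreover have "x^2 * w^2 \<ge> 0" by simp
  ultimately show ?thesis by linarith
qed

lemma quartic_root:
  fixes x s w :: real
  assumes "s > 0" "x > 0" "x < 1/3"
  shows "(w > 0 \<and> w^4 + x^2 * w^2 + s^2 * (3 * x - 1) * (1 - x) = 0) \<longleftrightarrow>
     w = sqrt (1/2 * (- (x^2) + sqrt (x ^ 4 + s^2 * (12 * x^2 - 16 * x + 4))))"
proof -
  define K where "K = s^2 * (3 * x - 1) * (1 - x)"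
  have K1: "(3 * x - 1) * (1 - x) < 0" using assms by (intro mult_neg_pos) auto
  have K: "K < 0" unfolding K_def using mult_pos_neg[OF _ K1, of "s^2"] assms by (simp add: mult.assoc)
  have D: "x ^ 4 + s^2 * (12 * x^2 - 16 * x + 4) = (x^2)^2 - 4 * K"
    unfolding K_def by (simp add: algebra_simps power2_eq_square power4_eq_xxxx)
  define S where "S = sqrt ((x^2)^2 - 4 * K)"
  have x4: "(x^2)^2 \<ge> 0" by simp
  have S0: "S \<ge> 0" unfolding S_def using K x4 by (intro real_sqrt_ge_zero) linarith
  have S2: "S^2 = (x^2)^2 - 4 * K" unfolding S_def using K x4
    by (intro real_sqrt_pow2) linarith
  have Sgt: "S > x^2"
  proof -
    have "(x^2)^2 < S^2" using S2 K by simp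
    then show ?thesis using S0 by (meson power_less_imp_less_base)
  qed
  define u where "u = 1/2 * (- (x^2) + S)"
  have u0: "u > 0" unfolding u_def using Sgt by simp
  have uq0: "u^2 + x^2 * u = (S^2 - (x^2)^2)/4" unfolding u_def
    by (simp add: field_simps power2_eq_square)
  have uq: "u^2 + x^2 * u + K = 0" using uq0 S2 by simp
  show ?thesis unfolding D S_def[symmetric] u_def[symmetric] K_def[symmetric]
  proof
    assume h: "w > 0 \<and> w^4 + x^2 * w^2 + K = 0"
    define v where "v = w^2"
    have v0: "v > 0" using h unfolding v_def by simp
    have "v^2 + x^2 * v + K = 0" using h unfolding v_def by (simp add: power4_eq_xxxx power2_eq_square)
    then have "(2 * v + x^2)^2 = S^2" using S2 by (simp add: algebra_simps power2_eq_square)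
    then have "2 * v + x^2 = S" using v0 S0
      by (metis add_pos_nonneg mult_pos_pos zero_less_numeral zero_le_power2 less_eq_real_def power2_eq_imp_eq)
    then have "v = u" unfolding u_def by simp
    then show "w = sqrt u" unfolding v_def using h by (metis real_sqrt_unique less_imp_le)
  next
    assume "w = sqrt u"
    then have "w > 0" "w^2 = u" using u0 by auto
    then show "w > 0 \<and> w^4 + x^2 * w^2 + K = 0" using uq
      by (metis power4_eq_xxxx power2_eq_square mult.assoc)
  qed
qed


lemma eqQ_abs: "eqQ s Y t \<bar>w\<bar> = eqQ s Y t w"
proof -
  have "\<bar>w\<bar>^4 = w^4" by (simp add: power_even_abs)
  then show ?thesis unfolding eqQ_def by simp
qed

lemma charC_imp_eqQ_abs:
  assumes "charC s Y t (\<i> * of_real w) = 0"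
  shows "eqQ s Y t \<bar>w\<bar> = 0"
  using charC_imp_eqQ[OF assms] eqQ_abs by simp

theorem theorem3p3:
  fixes s Y \<tau> :: real
  assumes "s > 0" and "Y > 0" and "\<tau> \<ge> 0"
    and "xp s Y \<tau> > 0" and "yp s Y \<tau> > 0"
  shows "omega_plus s Y (tau_star s Y) = 0
    \<and> (\<tau> \<ge> tau_star s Y \<longrightarrow>
          (\<forall>\<omega>::real. \<omega> > 0 \<longrightarrow> eqQ s Y \<tau> \<omega> \<noteq> 0)
        \<and> (\<forall>\<omega>::real. \<omega> \<noteq> 0 \<longrightarrow> charC s Y \<tau> (\<i> * of_real \<omega>) \<noteq> 0))
    \<and> (s / Y \<ge> 1/3 \<longrightarrow> tau_star s Y \<le> 0
        \<and> (\<forall>\<omega>::real. \<omega> \<noteq> 0 \<longrightarrow> charC s Y \<tau> (\<i> * of_real \<omega>) \<noteq> 0))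
    \<and> (s / Y < 1/3 \<longrightarrow> tau_star s Y > 0
        \<and> (\<tau> < tau_star s Y \<longrightarrow>
              xp s Y \<tau> \<in> {s / Y..<1/3}
            \<and> {\<omega>::real. \<omega> > 0 \<and> eqQ s Y \<tau> \<omega> = 0} = {omega_plus s Y \<tau>})
        \<and> ((\<exists>\<omega>::real. \<omega> \<noteq> 0 \<and> charC s Y \<tau> (\<i> * of_real \<omega>) = 0) \<longrightarrow>
              \<tau> \<in> {0<..<tau_star s Y}
            \<and> {z. Re z = 0 \<and> z \<noteq> 0 \<and> charC s Y \<tau> z = 0}
                = {\<i> * of_real (omega_plus s Y \<tau>), - \<i> * of_real (omega_plus s Y \<tau>)}))"
proof -
  note sY = assms(1,2)
  define x where "x = xp s Y \<tau>"
  define ts where "ts = tau_star s Y"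
  have x0: "x > 0" and x1: "x < 1" using assms(4,5) unfolding x_def yp_def xp_def by auto
  have Ypos: "Y / (3 * s) > 0" using sY by simp
  have T: "\<tau> \<ge> ts \<longleftrightarrow> x \<ge> 1/3"
  proof -
    have "\<tau> \<ge> ts \<longleftrightarrow> ln (Y / (3 * s)) \<le> s * \<tau>"
      unfolding ts_def tau_star_def using sY by (simp add: pos_divide_le_eq mult.commute)
    also have "\<dots> \<longleftrightarrow> ln (Y / (3 * s)) \<le> ln (exp (s * \<tau>))" by simp
    also have "\<dots> \<longleftrightarrow> Y / (3 * s) \<le> exp (s * \<tau>)" using Ypos by (intro ln_le_cancel_iff) auto
    also have "\<dots> \<longleftrightarrow> 1/3 \<le> x" unfolding x_def xp_def using sY by (simp add: field_simps)
    finally show ?thesis .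
  qed
  have xts: "xp s Y ts = 1/3"
  proof -
    have "exp (s * ts) = Y / (3 * s)" unfolding ts_def tau_star_def using sY Ypos by simp
    then show ?thesis unfolding xp_def using sY by simp
  qed
  have s81: "sqrt (1/81) = (1/9::real)" by (rule real_sqrt_unique) (simp_all add: power2_eq_square)
  have P1: "omega_plus s Y ts = 0" unfolding omega_plus_def xts
    by (simp add: power4_eq_xxxx power2_eq_square s81)
  have noQ: "\<forall>\<omega>::real. \<omega> > 0 \<longrightarrow> eqQ s Y \<tau> \<omega> \<noteq> 0" if "x \<ge> 1/3"
    using quartic_pos[OF assms(1) that x1] eqQ_rw[OF sY] unfolding x_def by simp
  have noC: "\<forall>\<omega>::real. \<omega> \<noteq> 0 \<longrightarrow> charC s Y \<tau> (\<i> * of_real \<omega>) \<noteq> 0" if "x \<ge> 1/3"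
  proof (intro allI impI notI)
    fix w :: real assume "w \<noteq> 0" "charC s Y \<tau> (\<i> * of_real w) = 0"
    then show False using charC_imp_eqQ_abs noQ[OF that, rule_format, of "\<bar>w\<bar>"] by auto
  qed
  have P2: "s / Y \<ge> 1/3 \<longrightarrow> ts \<le> 0 \<and> (\<forall>\<omega>::real. \<omega> \<noteq> 0 \<longrightarrow> charC s Y \<tau> (\<i> * of_real \<omega>) \<noteq> 0)"
  proof
    assume h: "s / Y \<ge> 1/3"
    have "Y / (3 * s) \<le> 1" using h sY by (simp add: field_simps)
    then have "ln (Y / (3 * s)) \<le> 0" using Ypos by simp
    then have "ts \<le> 0" unfolding ts_def tau_star_def using sY by (simp add: divide_nonpos_pos)
    then have "x \<ge> 1/3" using T assms(3) by linarith
    then show "ts \<le> 0 \<and> (\<forall>\<omega>::real. \<omega> \<noteq> 0 \<longrightarrow> charC s Y \<tau> (\<i> * of_real \<omega>) \<noteq> 0)"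
      using noC \<open>ts \<le> 0\<close> by blast
  qed
  have roots: "{\<omega>::real. \<omega> > 0 \<and> eqQ s Y \<tau> \<omega> = 0} = {omega_plus s Y \<tau>}" if "x < 1/3"
  proof -
    have "\<And>w. (w > 0 \<and> eqQ s Y \<tau> w = 0) \<longleftrightarrow> w = omega_plus s Y \<tau>"
      unfolding eqQ_rw[OF sY] omega_plus_def x_def[symmetric]
      using quartic_root[OF assms(1) x0 that] by simp
    then show ?thesis by auto
  qed
  have P3: "s / Y < 1/3 \<longrightarrow> ts > 0
        \<and> (\<tau> < ts \<longrightarrow>
              xp s Y \<tau> \<in> {s / Y..<1/3}
            \<and> {\<omega>::real. \<omega> > 0 \<and> eqQ s Y \<tau> \<omega> = 0} = {omega_plus s Y \<tau>})
        \<and> ((\<exists>\<omega>::real. \<omega> \<noteq> 0 \<and> charC s Y \<tau> (\<i> * of_real \<omega>) = 0) \<longrightarrow>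
              \<tau> \<in> {0<..<ts}
            \<and> {z. Re z = 0 \<and> z \<noteq> 0 \<and> charC s Y \<tau> z = 0}
                = {\<i> * of_real (omega_plus s Y \<tau>), - \<i> * of_real (omega_plus s Y \<tau>)})"
  proof (intro impI conjI)
    assume h: "s / Y < 1/3"
    have "Y / (3 * s) > 1" using h sY by (simp add: field_simps)
    then have "ln (Y / (3 * s)) > 0" by simp
    then show "ts > 0" unfolding ts_def tau_star_def using sY by simp
  next
    assume "\<tau> < ts"
    then have "x < 1/3" using T by linarith
    moreover have "x \<ge> s / Y"
    proof -
      have "exp (s * \<tau>) \<ge> 1" using sY assms(3) by simp
      then show ?thesis unfolding x_def xp_def using sY
        by (metis mult.right_neutral mult_left_mono divide_nonneg_pos less_imp_le)
    qed
    ultimately show "xp s Y \<tau> \<in> {s / Y..<1/3}" unfolding x_def by simp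
  next
    assume "\<tau> < ts"
    then have "x < 1/3" using T by linarith
    then show "{\<omega>::real. \<omega> > 0 \<and> eqQ s Y \<tau> \<omega> = 0} = {omega_plus s Y \<tau>}" by (rule roots)
  next
    assume "\<exists>\<omega>::real. \<omega> \<noteq> 0 \<and> charC s Y \<tau> (\<i> * of_real \<omega>) = 0"
    then obtain w0 where w0: "w0 \<noteq> 0" "charC s Y \<tau> (\<i> * of_real w0) = 0" by blast
    have xl: "x < 1/3"
    proof (rule ccontr)
      assume "\<not> x < 1/3"
      then have "x \<ge> 1/3" by simp
      from noC[OF this, rule_format, OF w0(1)] w0(2) show False by blast
    qed
    then have "\<tau> < ts" using T by linarith
    moreover have "\<tau> \<noteq> 0"
    proof
      assume t0: "\<tau> = 0"
      have "Im (charC s Y \<tau> (\<i> * of_real w0)) = (pp s Y \<tau> + qq s) * w0"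
        unfolding charC_def t0 by (simp add: power2_eq_square distrib_right)
      also have "\<dots> = x * w0" unfolding coef_rw[OF sY] x_def by simp
      finally show False using w0 x0 by simp
    qed
    ultimately show "\<tau> \<in> {0<..<ts}" using assms(3) by simp
    define wp where "wp = omega_plus s Y \<tau>"
    have R: "(w > 0 \<and> eqQ s Y \<tau> w = 0) \<longleftrightarrow> w = wp" for w
    proof -
      have "w \<in> {\<omega>::real. \<omega> > 0 \<and> eqQ s Y \<tau> \<omega> = 0} \<longleftrightarrow> w \<in> {wp}"
        using roots[OF xl] unfolding wp_def by simp
      then show ?thesis by simp
    qed
    have aw0: "\<bar>w0\<bar> = wp"
    proof -
      have "eqQ s Y \<tau> \<bar>w0\<bar> = 0" by (rule charC_imp_eqQ_abs[OF w0(2)])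
      moreover have "\<bar>w0\<bar> > 0" using w0(1) by simp
      ultimately show ?thesis using R[of "\<bar>w0\<bar>"] by blast
    qed
    have wp0: "wp > 0" using aw0 w0(1) by linarith
    have cn: "charC s Y \<tau> (- \<i> * of_real w) = 0" if "charC s Y \<tau> (\<i> * of_real w) = 0" for w
    proof -
      have e: "- \<i> * of_real w = cnj (\<i> * of_real w)" by simp
      have "charC s Y \<tau> (cnj (\<i> * of_real w)) = cnj 0" using charC_cnj[of s Y \<tau> "\<i> * of_real w"] that by simp
      then show ?thesis unfolding e by simp
    qed
    have both: "charC s Y \<tau> (\<i> * of_real wp) = 0 \<and> charC s Y \<tau> (- \<i> * of_real wp) = 0"
    proof (cases "w0 > 0")
      case True
      then have "w0 = wp" using aw0 by linarith
      then have h: "charC s Y \<tau> (\<i> * of_real wp) = 0" using w0(2) by simp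
      from h cn[OF h] show ?thesis by (rule conjI)
    next
      case False
      then have "w0 = - wp" using aw0 by linarith
      then have h: "charC s Y \<tau> (\<i> * of_real (- wp)) = 0" using w0(2) by simp
      have e1: "\<i> * of_real (- wp) = - \<i> * of_real wp" by simp
      have e2: "- \<i> * of_real (- wp) = \<i> * of_real wp" by simp
      have h2: "charC s Y \<tau> (- \<i> * of_real wp) = 0" using h unfolding e1 .
      have h1: "charC s Y \<tau> (\<i> * of_real wp) = 0" using cn[OF h] unfolding e2 .
      from h1 h2 show ?thesis by (rule conjI)
    qed
    show "{z. Re z = 0 \<and> z \<noteq> 0 \<and> charC s Y \<tau> z = 0}
                = {\<i> * of_real (omega_plus s Y \<tau>), - \<i> * of_real (omega_plus s Y \<tau>)}"
      unfolding wp_def[symmetric]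
    proof (intro equalityI subsetI)
      fix z assume "z \<in> {z. Re z = 0 \<and> z \<noteq> 0 \<and> charC s Y \<tau> z = 0}"
      then have z: "Re z = 0" "z \<noteq> 0" "charC s Y \<tau> z = 0" by auto
      define w where "w = Im z"
      have ze: "z = \<i> * of_real w" using z(1) unfolding w_def by (simp add: complex_eq_iff)
      have "w \<noteq> 0" using z(2) ze by auto
      moreover have "eqQ s Y \<tau> \<bar>w\<bar> = 0" using charC_imp_eqQ_abs[of s Y \<tau> w] z(3) unfolding ze by blast
      ultimately have "\<bar>w\<bar> = wp" using R[of "\<bar>w\<bar>"] by simp
      then have "w = wp \<or> w = - wp" by linarith
      then show "z \<in> {\<i> * of_real wp, - \<i> * of_real wp}" unfolding ze by auto
    next
      fix z assume "z \<in> {\<i> * of_real wp, - \<i> * of_real wp}"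
      then show "z \<in> {z. Re z = 0 \<and> z \<noteq> 0 \<and> charC s Y \<tau> z = 0}"
        using both wp0 by auto
    qed
  qed
  have P0: "\<tau> \<ge> ts \<longrightarrow> (\<forall>\<omega>::real. \<omega> > 0 \<longrightarrow> eqQ s Y \<tau> \<omega> \<noteq> 0)
        \<and> (\<forall>\<omega>::real. \<omega> \<noteq> 0 \<longrightarrow> charC s Y \<tau> (\<i> * of_real \<omega>) \<noteq> 0)"
  proof
    assume "\<tau> \<ge> ts"
    then have "x \<ge> 1/3" using T by blast
    then show "(\<forall>\<omega>::real. \<omega> > 0 \<longrightarrow> eqQ s Y \<tau> \<omega> \<noteq> 0)
        \<and> (\<forall>\<omega>::real. \<omega> \<noteq> 0 \<longrightarrow> charC s Y \<tau> (\<i> * of_real \<omega>) \<noteq> 0)"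
      using noQ noC by blast
  qed
  show ?thesis using P1 P0 P2 P3 unfolding ts_def by blast
qed

end
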